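(* Let $\theta\in(0,\pi/2)$ and let $\mathcal B$ be a family of Besicovitch balls in $(\mathbb H,d_\alpha)$. Then there is a finite family of points $\{p_j\}$ such that $\mathcal F=\{B(p_j,r_{p_j})\}$ is a family of Besicovitch balls, every $p_j$ satisfies $z_{p_j}\le0$ and $p_j\in\mathcal C(\theta)$, and $\operatorname{Card}\mathcal B\le 2\big(\tfrac{\pi}{\theta}+1\big)\operatorname{Card}\mathcal F+2$.
   Context: $\mathbb H=\mathbb R^3$, $p=(x_p,y_p,z_p)$, group law $(x,y,z)\cdot(x',y',z')=(x+x',y+y',z+z'+\tfrac12(xy'-yx'))$, dilations $\delta_\lambda(x,y,z)=(\lambda x,\lambda y,\lambda^2z)$. Fix $\alpha>0$ such that $d_\alpha(p,q)=\inf\{r>0:\delta_{1/r}(p^{-1}\cdot q)\in B_\alpha\}$ is a distance, $B_\alpha$ the closed Euclidean ball of radius $\alpha$ at $0$. $B(p,r)=\{q:d_\alpha(q,p)\le r\}$ and $r_p=d_\alpha(0,p)$. $\mathcal C(\theta)=\{p: |y_p|<x_p\tan\theta\}$. A family of Besicovitch balls is a finite family of balls $\{B(x_B,r_B)\}$ with $x_B\notin B'$ for distinct members $B,B'$ and with nonempty common intersection. *)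

theory Defs
  imports Complex_Main
begin

type_synonym heis = "real \<times> real \<times> real"

definition hmult :: "heis \<Rightarrow> heis \<Rightarrow> heis" where
  "hmult p q = (case p of (x, y, z) \<Rightarrow> case q of (x', y', z') \<Rightarrow>
      (x + x', y + y', z + z' + (x * y' - y * x') / 2))"

definition hinv :: "heis \<Rightarrow> heis" where
  "hinv p = (case p of (x, y, z) \<Rightarrow> (-x, -y, -z))"

definition hdil :: "real \<Rightarrow> heis \<Rightarrow> heis" where
  "hdil l p = (case p of (x, y, z) \<Rightarrow> (l * x, l * y, l^2 * z))"

definition euclid_ball :: "real \<Rightarrow> heis set" where
  "euclid_ball a = {(x, y, z). sqrt (x^2 + y^2 + z^2) \<le> a}"

definition d_alpha :: "real \<Rightarrow> heis \<Rightarrow> heis \<Rightarrow> real" where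
  "d_alpha a p q = Inf {r. r > 0 \<and> hdil (1 / r) (hmult (hinv p) q) \<in> euclid_ball a}"

definition is_distance :: "(heis \<Rightarrow> heis \<Rightarrow> real) \<Rightarrow> bool" where
  "is_distance d \<longleftrightarrow> (\<forall>p q. d p q = 0 \<longleftrightarrow> p = q) \<and> (\<forall>p q. d p q = d q p)
     \<and> (\<forall>p q s. d p s \<le> d p q + d q s)"

definition hball :: "real \<Rightarrow> heis \<Rightarrow> real \<Rightarrow> heis set" where
  "hball a p r = {q. d_alpha a q p \<le> r}"

definition rad :: "real \<Rightarrow> heis \<Rightarrow> real" where
  "rad a p = d_alpha a (0, 0, 0) p"

definition cone :: "real \<Rightarrow> heis set" where
  "cone \<theta> = {(x, y, z). \<bar>y\<bar> < x * tan \<theta>}"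

text \<open>A family of balls is represented as a set of (centre, radius) pairs.\<close>
definition besicovitch :: "real \<Rightarrow> (heis \<times> real) set \<Rightarrow> bool" where
  "besicovitch a F \<longleftrightarrow> finite F \<and> (\<forall>(c, r) \<in> F. r > 0)
     \<and> (\<forall>(c, r) \<in> F. \<forall>(c', r') \<in> F. (c, r) \<noteq> (c', r') \<longrightarrow> c \<notin> hball a c' r')
     \<and> (\<Inter>(c, r) \<in> F. hball a c r) \<noteq> {}"

end

theory Submission
  imports Defs
begin


lemma hmult_transl: "hmult (hinv (hmult g p)) (hmult g q) = hmult (hinv p) q"
  by (cases g; cases p; cases q) (simp add: hmult_def hinv_def algebra_simps field_simps)

lemma d_transl: "d_alpha a (hmult g p) (hmult g q) = d_alpha a p q"
  unfolding d_alpha_def hmult_transl ..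

lemma hmult_inv_self: "hmult (hinv p) p = (0,0,0)"
  by (cases p) (simp add: hmult_def hinv_def)

definition isom_aut :: "(heis \<Rightarrow> heis) \<Rightarrow> bool" where
  "isom_aut f \<longleftrightarrow> (\<forall>p q. f (hmult p q) = hmult (f p) (f q)) \<and> (\<forall>p. f (hinv p) = hinv (f p))
    \<and> (\<forall>l p. f (hdil l p) = hdil l (f p)) \<and> (\<forall>a p. f p \<in> euclid_ball a \<longleftrightarrow> p \<in> euclid_ball a)"

lemma isom_d: "isom_aut f \<Longrightarrow> d_alpha a (f p) (f q) = d_alpha a p q"
  unfolding d_alpha_def isom_aut_def by (metis)

lemma isom_0: "isom_aut f \<Longrightarrow> f (0,0,0) = (0,0,0)"
proof -
  assume "isom_aut f"
  then have "f (hdil 0 (0,0,0)) = hdil 0 (f (0,0,0))" unfolding isom_aut_def by blast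
  then show ?thesis by (cases "f (0,0,0)") (simp add: hdil_def)
qed

definition hrot :: "real \<Rightarrow> heis \<Rightarrow> heis" where
  "hrot t p = (case p of (x,y,z) \<Rightarrow> (x * cos t - y * sin t, x * sin t + y * cos t, z))"

definition hflip :: "heis \<Rightarrow> heis" where
  "hflip p = (case p of (x,y,z) \<Rightarrow> (x, -y, -z))"

lemma rot_sq_gen: "(s::real)^2 + c^2 = 1 \<Longrightarrow> (x * c - y * s)^2 + (x * s + y * c)^2 = x^2 + (y::real)^2"
proof -
  assume h: "s^2 + c^2 = 1"
  have "(x * c - y * s)^2 + (x * s + y * c)^2 = (x^2 + y^2) * (s^2 + c^2)"
    by (simp add: power2_eq_square algebra_simps)
  then show ?thesis using h by simp
qed

lemma rot_sq: "(x * cos t - y * sin t)^2 + (x * sin t + y * cos t)^2 = x^2 + (y::real)^2"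
  by (rule rot_sq_gen) simp

lemma rot_symp_gen: "(s::real)^2 + c^2 = 1 \<Longrightarrow> (x * c - y * s) * (x' * s + y' * c) - (x * s + y * c) * (x' * c - y' * s)
   = x * y' - y * (x'::real)"
proof -
  assume h: "s^2 + c^2 = 1"
  have "(x * c - y * s) * (x' * s + y' * c) - (x * s + y * c) * (x' * c - y' * s)
   = (x * y' - y * x') * (s^2 + c^2)"
    by (simp add: power2_eq_square algebra_simps)
  then show ?thesis using h by simp
qed

lemma rot_symp: "(x * cos t - y * sin t) * (x' * sin t + y' * cos t) - (x * sin t + y * cos t) * (x' * cos t - y' * sin t)
   = x * y' - y * (x'::real)"
  by (rule rot_symp_gen) simp

lemma isom_hrot: "isom_aut (hrot t)"
  unfolding isom_aut_def
proof (intro conjI allI)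
  fix p q show "hrot t (hmult p q) = hmult (hrot t p) (hrot t q)"
  proof (cases p; cases q)
    fix x y z x' y' z' assume pq: "p = (x,y,z)" "q = (x',y',z')"
    have e2: "hmult (hrot t p) (hrot t q) = (x * cos t - y * sin t + (x' * cos t - y' * sin t),
       x * sin t + y * cos t + (x' * sin t + y' * cos t), z + z' + (x * y' - y * x')/2)"
      by (simp only: pq hrot_def hmult_def prod.case rot_symp)
    have e1: "hrot t (hmult p q) = (x * cos t - y * sin t + (x' * cos t - y' * sin t),
       x * sin t + y * cos t + (x' * sin t + y' * cos t), z + z' + (x * y' - y * x')/2)"
      by (simp add: pq hrot_def hmult_def algebra_simps)
    show ?thesis using e1 e2 by simp
  qed
next
  fix p show "hrot t (hinv p) = hinv (hrot t p)"
    by (cases p) (simp add: hrot_def hinv_def algebra_simps)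
next
  fix l p show "hrot t (hdil l p) = hdil l (hrot t p)"
    by (cases p) (simp add: hrot_def hdil_def algebra_simps)
next
  fix a p show "hrot t p \<in> euclid_ball a \<longleftrightarrow> p \<in> euclid_ball a"
    using rot_sq by (cases p) (simp add: hrot_def euclid_ball_def)
qed

lemma isom_hflip: "isom_aut hflip"
  unfolding isom_aut_def
proof (intro conjI allI)
  fix p q show "hflip (hmult p q) = hmult (hflip p) (hflip q)"
    by (cases p; cases q) (simp add: hflip_def hmult_def algebra_simps add_divide_distrib diff_divide_distrib)
next
  fix p show "hflip (hinv p) = hinv (hflip p)"
    by (cases p) (simp add: hflip_def hinv_def algebra_simps)
next
  fix l p show "hflip (hdil l p) = hdil l (hflip p)"
    by (cases p) (simp add: hflip_def hdil_def algebra_simps)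
next
  fix a p show "hflip p \<in> euclid_ball a \<longleftrightarrow> p \<in> euclid_ball a"
    by (cases p) (simp add: hflip_def euclid_ball_def)
qed

lemma sq3: "(u::real)^2 + v^2 + w^2 \<le> (\<bar>u\<bar> + \<bar>v\<bar> + \<bar>w\<bar>)^2"
proof -
  have e: "(\<bar>u\<bar> + \<bar>v\<bar> + \<bar>w\<bar>)^2 = \<bar>u\<bar>^2 + \<bar>v\<bar>^2 + \<bar>w\<bar>^2 + 2 * (\<bar>u\<bar> * \<bar>v\<bar> + \<bar>u\<bar> * \<bar>w\<bar> + \<bar>v\<bar> * \<bar>w\<bar>)"
    by (simp only: power2_eq_square) (simp only: algebra_simps)
  have "0 \<le> \<bar>u\<bar> * \<bar>v\<bar> + \<bar>u\<bar> * \<bar>w\<bar> + \<bar>v\<bar> * \<bar>w\<bar>" by simp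
  then show ?thesis unfolding e by simp
qed

lemma set_ne:
  assumes "a > 0" shows "\<exists>r>0. hdil (1/r) p \<in> euclid_ball a"
proof (cases p)
  case (fields x y z)
  define M where "M = \<bar>x\<bar> + \<bar>y\<bar> + \<bar>z\<bar>"
  define r where "r = 1 + 2 * M / a"
  have M0: "M \<ge> 0" unfolding M_def by simp
  have r1: "r \<ge> 1" unfolding r_def using M0 assms by simp
  have Mr: "M \<le> r * a" unfolding r_def using M0 assms by (simp add: field_simps)
  have zr: "\<bar>z\<bar> / r^2 \<le> \<bar>z\<bar> / r"
    using r1 by (simp add: frac_le power2_eq_square)
  have "\<bar>x / r\<bar> + \<bar>y / r\<bar> + \<bar>z / r^2\<bar> \<le> M / r"
    using zr r1 unfolding M_def by (simp add: add_divide_distrib)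
  also have "M / r \<le> a" using Mr r1 by (simp add: divide_le_eq mult.commute)
  finally have le: "\<bar>x / r\<bar> + \<bar>y / r\<bar> + \<bar>z / r^2\<bar> \<le> a" .
  have "(x/r)^2 + (y/r)^2 + (z/r^2)^2 \<le> (\<bar>x / r\<bar> + \<bar>y / r\<bar> + \<bar>z / r^2\<bar>)^2"
    by (rule sq3)
  then have "sqrt ((x/r)^2 + (y/r)^2 + (z/r^2)^2) \<le> sqrt ((\<bar>x / r\<bar> + \<bar>y / r\<bar> + \<bar>z / r^2\<bar>)^2)"
    by (rule real_sqrt_le_mono)
  also have "\<dots> = \<bar>x / r\<bar> + \<bar>y / r\<bar> + \<bar>z / r^2\<bar>"
    by (simp add: real_sqrt_abs)
  finally have "sqrt ((x/r)^2 + (y/r)^2 + (z/r^2)^2) \<le> \<bar>x / r\<bar> + \<bar>y / r\<bar> + \<bar>z / r^2\<bar>" .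
  moreover have "hdil (1/r) p = (x/r, y/r, z/r^2)" by (simp add: fields hdil_def power_divide)
  ultimately show ?thesis using le r1
    by (intro exI[of _ r]) (simp add: euclid_ball_def)
qed



lemma d_nonneg: assumes "a > 0" shows "d_alpha a p q \<ge> 0"
  unfolding d_alpha_def
  by (rule cInf_greatest) (use set_ne[OF assms] in auto)

lemma axis_mono:
  assumes "a > 0" "\<bar>v - u\<bar> \<le> \<bar>v\<bar>"
  shows "d_alpha a (0,0,u) (0,0,v) \<le> d_alpha a (0,0,0) (0,0,v)"
proof -
  have h1: "hmult (hinv (0,0,u)) (0,0,v) = (0,0,v-u)" by (simp add: hmult_def hinv_def)
  have h2: "hmult (hinv (0,0,0)) (0,0,v) = (0,0,v)" by (simp add: hmult_def hinv_def)
  have mem: "hdil (1/r) (0,0,w) \<in> euclid_ball a \<longleftrightarrow> \<bar>w\<bar> / r^2 \<le> a" for r w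
    by (simp add: hdil_def euclid_ball_def power_divide)
  show ?thesis
    unfolding d_alpha_def h1 h2
  proof (rule cInf_superset_mono)
    show "{r. 0 < r \<and> hdil (1 / r) (0, 0, v) \<in> euclid_ball a} \<noteq> {}" using set_ne[OF assms(1)] by auto
    show "bdd_below {r. 0 < r \<and> hdil (1 / r) (0, 0, v - u) \<in> euclid_ball a}"
      by (rule bdd_belowI[of _ 0]) auto
    show "{r. 0 < r \<and> hdil (1 / r) (0, 0, v) \<in> euclid_ball a}
        \<subseteq> {r. 0 < r \<and> hdil (1 / r) (0, 0, v - u) \<in> euclid_ball a}"
    proof
      fix r assume "r \<in> {r. 0 < r \<and> hdil (1 / r) (0, 0, v) \<in> euclid_ball a}"
      then have r: "r > 0" "\<bar>v\<bar> / r^2 \<le> a" using mem by auto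
      have "\<bar>v - u\<bar> / r^2 \<le> \<bar>v\<bar> / r^2" using assms(2) r(1) by (simp add: divide_right_mono)
      then show "r \<in> {r. 0 < r \<and> hdil (1 / r) (0, 0, v - u) \<in> euclid_ball a}" using r mem by auto
    qed
  qed
qed

definition Bes :: "real \<Rightarrow> heis set \<Rightarrow> bool" where
  "Bes a S \<longleftrightarrow> (\<forall>s\<in>S. \<forall>s'\<in>S. s \<noteq> s' \<longrightarrow> d_alpha a s s' > rad a s')"

lemma Bes_subset: "Bes a S \<Longrightarrow> T \<subseteq> S \<Longrightarrow> Bes a T"
  unfolding Bes_def by blast

lemma Bes_isom:
  assumes "isom_aut f" "Bes a S" shows "Bes a (f ` S)"
  unfolding Bes_def
proof (intro ballI impI)
  fix s s' assume ss: "s \<in> f ` S" "s' \<in> f ` S" "s \<noteq> s'"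
  then obtain p p' where pp: "p \<in> S" "p' \<in> S" "s = f p" "s' = f p'" by blast
  then have "p \<noteq> p'" using ss by blast
  then have lt: "rad a p' < d_alpha a p p'" using assms(2) pp unfolding Bes_def by blast
  have "rad a (f p') = d_alpha a (f (0,0,0)) (f p')" unfolding rad_def isom_0[OF assms(1)] ..
  also have "\<dots> = rad a p'" unfolding rad_def isom_d[OF assms(1)] ..
  finally show "rad a s' < d_alpha a s s'" using lt pp isom_d[OF assms(1)] by simp
qed

lemma dist_zero: "is_distance d \<Longrightarrow> d p q = 0 \<longleftrightarrow> p = q"
  unfolding is_distance_def by blast

lemma isom_inj:
  assumes "isom_aut f" "is_distance (d_alpha a)" shows "inj f"
proof
  fix p q assume "f p = f q"
  then have "d_alpha a (f p) (f q) = 0" using dist_zero[OF assms(2)] by simp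
  then show "p = q" using isom_d[OF assms(1)] dist_zero[OF assms(2)] by simp
qed

lemma Bes_besicovitch:
  assumes "a > 0" "is_distance (d_alpha a)" "finite P" "Bes a P" "(0,0,0) \<notin> P"
  shows "besicovitch a ((\<lambda>p. (p, rad a p)) ` P)"
  unfolding besicovitch_def
proof (intro conjI)
  show "finite ((\<lambda>p. (p, rad a p)) ` P)" using assms(3) by simp
  show "\<forall>(c, r)\<in>(\<lambda>p. (p, rad a p)) ` P. 0 < r"
  proof clarify
    fix p assume "p \<in> P"
    then have "rad a p \<noteq> 0" unfolding rad_def using dist_zero[OF assms(2)] assms(5) by metis
    then show "0 < rad a p" using d_nonneg[OF assms(1)] unfolding rad_def
      by (metis order_le_less)
  qed
  show "\<forall>(c, r)\<in>(\<lambda>p. (p, rad a p)) ` P. \<forall>(c', r')\<in>(\<lambda>p. (p, rad a p)) ` P.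
          (c, r) \<noteq> (c', r') \<longrightarrow> c \<notin> hball a c' r'"
  proof -
    have "\<And>p p'. p\<in>P \<Longrightarrow> p'\<in>P \<Longrightarrow> (p, rad a p) \<noteq> (p', rad a p') \<Longrightarrow> p \<notin> hball a p' (rad a p')"
      using assms(4) unfolding Bes_def hball_def by (metis (mono_tags) mem_Collect_eq not_le)
    then show ?thesis by fastforce
  qed
  have "(0,0,0) \<in> (\<Inter>(c, r)\<in>(\<lambda>p. (p, rad a p)) ` P. hball a c r)"
    unfolding hball_def rad_def by auto
  then show "(\<Inter>(c, r)\<in>(\<lambda>p. (p, rad a p)) ` P. hball a c r) \<noteq> {}" by blast
qed

lemma card_img_pair: "card ((\<lambda>p. (p, f p)) ` P) = card P"
  by (rule card_image) (auto simp: inj_on_def)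

lemma extract_S:
  assumes "a > 0" "is_distance (d_alpha a)" "besicovitch a B"
  shows "\<exists>S. finite S \<and> card S = card B \<and> Bes a S"
proof -
  from assms(3) have fin: "finite B" and pos: "\<forall>(c, r)\<in>B. 0 < r"
    and sep: "\<forall>(c, r)\<in>B. \<forall>(c', r')\<in>B. (c, r) \<noteq> (c', r') \<longrightarrow> c \<notin> hball a c' r'"
    and ne: "(\<Inter>(c, r)\<in>B. hball a c r) \<noteq> {}"
    unfolding besicovitch_def by auto
  from ne obtain q where qin: "q \<in> (\<Inter>(c, r)\<in>B. hball a c r)" by blast
  have q: "d_alpha a q c \<le> r" if cr: "(c,r) \<in> B" for c r
  proof -
    from qin have "\<forall>x\<in>B. q \<in> (case x of (c,r) \<Rightarrow> hball a c r)" by simp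
    from bspec[OF this cr] show ?thesis unfolding hball_def by simp
  qed
  define tr where "tr = (\<lambda>cr :: heis \<times> real. hmult (hinv q) (fst cr))"
  have dtr: "d_alpha a (tr x) (tr y) = d_alpha a (fst x) (fst y)" for x y
    unfolding tr_def d_transl ..
  have rtr: "rad a (tr y) = d_alpha a q (fst y)" for y
    unfolding rad_def tr_def by (metis d_transl hmult_inv_self)
  have inj: "inj_on tr B"
  proof
    fix x y assume xy: "x \<in> B" "y \<in> B" "tr x = tr y"
    obtain c r c' r' where x: "x = (c,r)" and y: "y = (c',r')" by fastforce
    have "d_alpha a (tr x) (tr y) = 0" using xy(3) dist_zero[OF assms(2)] by simp
    then have "d_alpha a c c' = 0" using dtr[of x y] x y by simp
    then have cc: "c = c'" using dist_zero[OF assms(2)] by simp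
    show "x = y"
    proof (rule ccontr)
      assume "x \<noteq> y"
      then have "c \<notin> hball a c' r'" using sep xy x y by fastforce
      moreover have "r' > 0" using pos xy y by auto
      moreover have "d_alpha a c' c' = 0" using dist_zero[OF assms(2)] by simp
      ultimately show False using cc unfolding hball_def by simp
    qed
  qed
  have "Bes a (tr ` B)"
    unfolding Bes_def
  proof (intro ballI impI)
    fix s s' assume ss: "s \<in> tr ` B" "s' \<in> tr ` B" "s \<noteq> s'"
    then obtain x y where xy: "x \<in> B" "y \<in> B" "tr x \<noteq> tr y" and sx: "s = tr x" "s' = tr y" by blast
    obtain c r c' r' where x: "x = (c,r)" and y: "y = (c',r')" by fastforce
    have "x \<noteq> y" using xy by auto
    then have "c \<notin> hball a c' r'" using sep xy x y by fastforce
    then have "d_alpha a c c' > r'" unfolding hball_def by simp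
    moreover have "d_alpha a q c' \<le> r'" using q xy y by auto
    ultimately show "rad a s' < d_alpha a s s'" using dtr rtr x y sx by simp
  qed
  then show ?thesis using fin inj card_image[OF inj] by (intro exI[of _ "tr ` B"]) auto
qed



lemma cone_sin: assumes "\<bar>\<psi>\<bar> < \<theta>" "\<theta> < pi/2" shows "\<bar>sin \<psi>\<bar> < cos \<psi> * tan \<theta>"
proof -
  have ct: "cos \<theta> > 0" using assms by (intro cos_gt_zero_pi) auto
  have cp: "cos \<psi> > 0" using assms by (intro cos_gt_zero_pi) auto
  have "sin (\<theta> - \<bar>\<psi>\<bar>) > 0" using assms by (intro sin_gt_zero) auto
  then have h: "sin \<theta> * cos \<bar>\<psi>\<bar> - cos \<theta> * sin \<bar>\<psi>\<bar> > 0" by (simp add: sin_diff)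
  have c: "cos \<bar>\<psi>\<bar> = cos \<psi>" by (cases "\<psi> \<ge> 0") auto
  have s: "sin \<bar>\<psi>\<bar> = \<bar>sin \<psi>\<bar>"
  proof (cases "\<psi> \<ge> 0")
    case True
    then have "sin \<psi> \<ge> 0" using assms by (intro sin_ge_zero) auto
    then show ?thesis using True by simp
  next
    case False
    then have "sin (-\<psi>) \<ge> 0" using assms by (intro sin_ge_zero) auto
    then show ?thesis using False by simp
  qed
  have "\<bar>sin \<psi>\<bar> * cos \<theta> < cos \<psi> * sin \<theta>" using h c s by (simp add: mult.commute)
  then have "\<bar>sin \<psi>\<bar> < cos \<psi> * sin \<theta> / cos \<theta>" using ct by (simp add: less_divide_eq)
  then show ?thesis by (simp add: tan_def)
qed

lemma cone_pt: assumes "\<rho> > 0" "\<bar>\<psi>\<bar> < \<theta>" "\<theta> < pi/2"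
  shows "(\<rho> * cos \<psi>, \<rho> * sin \<psi>, z) \<in> cone \<theta>"
proof -
  have "\<rho> * \<bar>sin \<psi>\<bar> < \<rho> * (cos \<psi> * tan \<theta>)" using cone_sin[OF assms(2,3)] assms(1) by simp
  then show ?thesis unfolding cone_def by (simp add: abs_mult mult.assoc abs_of_pos[OF assms(1)])
qed

lemma hrot_polar: "hrot (-\<tau>) (\<rho> * cos \<phi>, \<rho> * sin \<phi>, z) = (\<rho> * cos (\<phi> - \<tau>), \<rho> * sin (\<phi> - \<tau>), z)"
  by (simp add: hrot_def cos_diff sin_diff algebra_simps)

lemma angle_cover:
  fixes \<theta> :: real and k :: nat
  assumes th: "0 < \<theta>" "\<theta> < pi/2" and k: "k \<ge> 1" and kk: "pi / \<theta> < real k"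
    and xy: "(x,y) \<noteq> (0,0)"
  shows "\<exists>j<k. hrot (-(real j * (2*pi/k))) (x,y,z) \<in> cone \<theta>"
proof -
  define \<delta> where "\<delta> = 2*pi/k"
  have dpos: "\<delta> > 0" using k by (simp add: \<delta>_def)
  have "pi < \<theta> * k" using kk th by (simp add: divide_less_eq mult.commute)
  then have dth: "\<delta> < 2*\<theta>" using k by (simp add: \<delta>_def divide_less_eq mult.commute)
  have kd: "real k * \<delta> = 2 * pi" using k by (simp add: \<delta>_def)
  define \<rho> where "\<rho> = sqrt (x^2 + y^2)"
  have pos: "x^2 + y^2 > 0" using xy by (auto simp: sum_power2_gt_zero_iff)
  then have rpos: "\<rho> > 0" by (simp add: \<rho>_def)
  have r2: "\<rho>^2 = x^2 + y^2" using pos by (simp add: \<rho>_def)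
  have "(x/\<rho>)^2 + (y/\<rho>)^2 = (x^2+y^2)/\<rho>^2" by (simp add: power_divide add_divide_distrib)
  also have "\<dots> = 1" using rpos by (simp add: r2[symmetric])
  finally have "(x/\<rho>)^2 + (y/\<rho>)^2 = 1" .
  then obtain \<phi> where ph: "0 \<le> \<phi>" "\<phi> < 2*pi" "x/\<rho> = cos \<phi>" "y/\<rho> = sin \<phi>"
    by (rule sincos_total_2pi)
  have "x = \<rho> * (x/\<rho>)" "y = \<rho> * (y/\<rho>)" using rpos by simp_all
  then have x: "x = \<rho> * cos \<phi>" and y: "y = \<rho> * sin \<phi>" using ph by simp_all
  define j0 where "j0 = \<lfloor>\<phi>/\<delta> + 1/2\<rfloor>"
  have fl: "of_int j0 \<le> \<phi>/\<delta> + 1/2" "\<phi>/\<delta> + 1/2 < of_int j0 + 1"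
    unfolding j0_def by linarith+
  define \<psi> where "\<psi> = \<phi> - of_int j0 * \<delta>"
  have "\<psi> = \<delta> * (\<phi>/\<delta> - of_int j0)" using dpos by (simp add: \<psi>_def field_simps)
  moreover have "\<bar>\<phi>/\<delta> - of_int j0\<bar> \<le> 1/2" using fl by linarith
  ultimately have "\<bar>\<psi>\<bar> \<le> \<delta> / 2" using dpos by (simp add: abs_mult)
  then have psi: "\<bar>\<psi>\<bar> < \<theta>" using dth by linarith
  have j0pos: "j0 \<ge> 0" using ph(1) dpos by (simp add: j0_def)
  have "\<phi>/\<delta> < real k" using ph dpos kd by (simp add: divide_less_eq mult.commute)
  then have j0k: "j0 \<le> int k" using fl by linarith
  show ?thesis
  proof (cases "j0 < int k")
    case True
    have jj: "real (nat j0) = of_int j0" using j0pos by simp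
    have "hrot (-(real (nat j0) * \<delta>)) (x,y,z) = (\<rho> * cos \<psi>, \<rho> * sin \<psi>, z)"
      unfolding x y hrot_polar \<psi>_def jj ..
    then have "hrot (-(real (nat j0) * \<delta>)) (x,y,z) \<in> cone \<theta>" using cone_pt[OF rpos psi th(2)] by simp
    moreover have "nat j0 < k" using True j0pos by presburger
    ultimately show ?thesis unfolding \<delta>_def by blast
  next
    case False
    then have "j0 = int k" using j0k by simp
    then have "\<phi> = \<psi> + 2 * pi" using kd by (simp add: \<psi>_def)
    then have "hrot (-(real 0 * \<delta>)) (x,y,z) = (\<rho> * cos \<psi>, \<rho> * sin \<psi>, z)"
      unfolding x y hrot_polar by simp
    then have "hrot (-(real 0 * \<delta>)) (x,y,z) \<in> cone \<theta>" using cone_pt[OF rpos psi th(2)] by simp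
    then show ?thesis using k \<delta>_def by (intro exI[of _ 0]) auto
  qed
qed

lemma axis_half:
  assumes a: "a > 0" and B: "Bes a S" and AS: "A \<subseteq> S" and fin: "finite A"
    and ax: "\<forall>s\<in>A. fst s = 0 \<and> fst (snd s) = 0"
    and sg: "(\<forall>s\<in>A. snd (snd s) > 0) \<or> (\<forall>s\<in>A. snd (snd s) < 0)"
  shows "card A \<le> 1"
proof -
  have contra: False if "(0,0,u) \<in> S" "(0,0,v) \<in> S" "u \<noteq> v" "\<bar>v - u\<bar> \<le> \<bar>v\<bar>" for u v
  proof -
    have "d_alpha a (0,0,u) (0,0,v) > rad a (0,0,v)" using B that unfolding Bes_def by auto
    moreover have "d_alpha a (0,0,u) (0,0,v) \<le> rad a (0,0,v)" unfolding rad_def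
      using axis_mono[OF a that(4)] .
    ultimately show False by simp
  qed
  have "\<forall>s1\<in>A. \<forall>s2\<in>A. s1 = s2"
  proof (intro ballI)
    fix s1 s2 assume s: "s1 \<in> A" "s2 \<in> A"
    obtain u where u: "s1 = (0,0,u)" using ax s by (cases s1) auto
    obtain v where v: "s2 = (0,0,v)" using ax s by (cases s2) auto
    show "s1 = s2"
    proof (rule ccontr)
      assume "s1 \<noteq> s2"
      then have uv: "u \<noteq> v" using u v by auto
      have inS: "(0,0,u) \<in> S" "(0,0,v) \<in> S" using s u v AS by auto
      have "(u > 0 \<and> v > 0) \<or> (u < 0 \<and> v < 0)" using sg s u v by force
      then have "\<bar>v - u\<bar> \<le> \<bar>v\<bar> \<or> \<bar>u - v\<bar> \<le> \<bar>u\<bar>" by linarith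
      then show False using contra inS uv by metis
    qed
  qed
  then show ?thesis using card_le_Suc0_iff_eq[OF fin] by simp
qed

lemma isom_comp: "isom_aut f \<Longrightarrow> isom_aut g \<Longrightarrow> isom_aut (f \<circ> g)"
  unfolding isom_aut_def by (simp del: split_paired_All)

lemma hflip_cone: "hflip p \<in> cone t \<longleftrightarrow> p \<in> cone t"
  by (cases p) (simp add: hflip_def cone_def)



theorem lemma3p1:
  fixes \<alpha> \<theta> :: real and \<B> :: "(heis \<times> real) set"
  assumes "\<alpha> > 0" and "is_distance (d_alpha \<alpha>)"
    and "0 < \<theta>" and "\<theta> < pi / 2"
    and "besicovitch \<alpha> \<B>"
  shows "\<exists>P :: heis set. finite P
    \<and> besicovitch \<alpha> ((\<lambda>p. (p, rad \<alpha> p)) ` P)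
    \<and> (\<forall>p \<in> P. snd (snd p) \<le> 0 \<and> p \<in> cone \<theta>)
    \<and> real (card \<B>) \<le> 2 * (pi / \<theta> + 1) * real (card ((\<lambda>p. (p, rad \<alpha> p)) ` P)) + 2"
proof -
  note a = assms(1) and dist = assms(2)
  obtain S where S: "finite S" "card S = card \<B>" "Bes \<alpha> S" using extract_S[OF assms(1,2,5)] by blast
  show ?thesis
  proof (cases "card \<B> \<le> 2")
    case True
    then show ?thesis by (intro exI[of _ "{}"]) (simp add: besicovitch_def)
  next
    case False
    then have cS: "card S \<ge> 3" using S by simp
    have S0n: "(0,0,0) \<notin> S"
    proof
      assume z: "(0,0,0) \<in> S"
      have "card (S - {(0,0,0)}) \<ge> 2" using cS z S(1) by simp
      then obtain s' where s': "s' \<in> S" "s' \<noteq> (0,0,0)"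
        by (metis Diff_iff card.empty empty_iff ex_in_conv insert_iff not_numeral_le_zero)
      have "d_alpha \<alpha> (0,0,0) s' > rad \<alpha> s'" using S(3) z s' unfolding Bes_def by metis
      then show False unfolding rad_def by simp
    qed
    define k where "k = nat \<lfloor>pi/\<theta>\<rfloor> + 1"
    have pt: "pi/\<theta> > 0" using assms(3) by simp
    have fk: "real (nat \<lfloor>pi/\<theta>\<rfloor>) = of_int \<lfloor>pi/\<theta>\<rfloor>" using pt by simp
    have k1: "k \<ge> 1" unfolding k_def by simp
    have kk: "pi/\<theta> < real k" unfolding k_def using fk by linarith
    have kle: "real k \<le> pi/\<theta> + 1" unfolding k_def using fk by linarith
    define \<delta> where "\<delta> = 2*pi/real k"
    define S0 where "S0 = {s\<in>S. fst s = 0 \<and> fst (snd s) = 0}"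
    define S1 where "S1 = S - S0"
    define J where "J s = (SOME j. j<k \<and> hrot (-(real j*\<delta>)) s \<in> cone \<theta>)" for s
    define cls where "cls s = (J s, 0 < snd (snd s))" for s
    have Jok: "J s < k \<and> hrot (-(real (J s)*\<delta>)) s \<in> cone \<theta>" if s: "s \<in> S1" for s
    proof -
      obtain x y z where sx: "s = (x,y,z)" by (cases s)
      have "(x,y) \<noteq> (0,0)" using s sx unfolding S1_def S0_def by auto
      from angle_cover[OF assms(3,4) k1 kk this, of z]
      have "\<exists>j. j<k \<and> hrot (-(real j*\<delta>)) s \<in> cone \<theta>" unfolding \<delta>_def sx by blast
      then show ?thesis unfolding J_def by (rule someI_ex)
    qed
    define T where "T j b = (if b then hflip \<circ> hrot (-(real j*\<delta>)) else hrot (-(real j*\<delta>)))" for j b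
    have isoT: "isom_aut (T j b)" for j b
      unfolding T_def using isom_comp[OF isom_hflip isom_hrot] isom_hrot by simp
    define I where "I = {..<k} \<times> (UNIV :: bool set)"
    define fib where "fib i = {s\<in>S1. cls s = i}" for i
    have finI: "finite I" unfolding I_def by simp
    have cardI: "card I = 2 * k" unfolding I_def by (simp add: card_cartesian_product)
    have "(0,True) \<in> I" using k1 unfolding I_def by simp
    then have IneE: "I \<noteq> {}" by blast
    have S1U: "S1 = (\<Union>i\<in>I. fib i)"
      unfolding fib_def I_def cls_def using Jok by auto
    have finS1: "finite S1" using S(1) unfolding S1_def by simp
    have "Max ((\<lambda>i. card (fib i)) ` I) \<in> (\<lambda>i. card (fib i)) ` I"
      by (rule Max_in) (use finI IneE in auto)
    then obtain i0 where i0: "i0 \<in> I" "card (fib i0) = Max ((\<lambda>i. card (fib i)) ` I)" by auto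
    have imax: "card (fib i) \<le> card (fib i0)" if "i \<in> I" for i
      using i0(2) finI that by simp
    have "card S1 \<le> (\<Sum>i\<in>I. card (fib i))" unfolding S1U by (rule card_UN_le[OF finI])
    also have "\<dots> \<le> card I * card (fib i0)" using sum_bounded_above[of I "\<lambda>i. card (fib i)" "card (fib i0)"] imax by simp
    finally have cS1: "card S1 \<le> 2 * k * card (fib i0)" using cardI by simp
    obtain j0 b0 where ij: "i0 = (j0, b0)" by fastforce
    define C where "C = fib i0"
    define P where "P = T j0 b0 ` C"
    have CS: "C \<subseteq> S" unfolding C_def fib_def S1_def by auto
    have finC: "finite C" using CS S(1) finite_subset by blast
    have finP: "finite P" unfolding P_def using finC by simp
    have BesP: "Bes \<alpha> P" unfolding P_def using Bes_isom[OF isoT Bes_subset[OF S(3) CS]] .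
    have injT: "inj (T j0 b0)" using isom_inj[OF isoT dist] .
    have P0: "(0,0,0) \<notin> P"
    proof
      assume "(0,0,0) \<in> P"
      then obtain s where s: "s \<in> C" "T j0 b0 s = (0,0,0)" unfolding P_def by auto
      then have "T j0 b0 s = T j0 b0 (0,0,0)" using isom_0[OF isoT] by simp
      then have "s = (0,0,0)" using injT by (simp add: inj_eq)
      then show False using s CS S0n by auto
    qed
    have besP: "besicovitch \<alpha> ((\<lambda>p. (p, rad \<alpha> p)) ` P)"
      by (rule Bes_besicovitch[OF a dist finP BesP P0])
    have propP: "\<forall>p \<in> P. snd (snd p) \<le> 0 \<and> p \<in> cone \<theta>"
    proof
      fix p assume "p \<in> P"
      then obtain s where s: "s \<in> C" "p = T j0 b0 s" unfolding P_def by auto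
      then have sS1: "s \<in> S1" and cl: "cls s = (j0, b0)" unfolding C_def fib_def ij by auto
      have Js: "J s = j0" and bs: "b0 = (0 < snd (snd s))" using cl unfolding cls_def by auto
      have hc: "hrot (-(real j0*\<delta>)) s \<in> cone \<theta>" using Jok[OF sS1] Js by simp
      have hz: "snd (snd (hrot t s)) = snd (snd s)" for t by (cases s) (simp add: hrot_def)
      show "snd (snd p) \<le> 0 \<and> p \<in> cone \<theta>"
      proof (cases b0)
        case True
        have fz: "snd (snd (hflip q)) = - snd (snd q)" for q by (cases q) (simp add: hflip_def)
        show ?thesis using True bs hc hz fz s(2) hflip_cone unfolding T_def by simp
      next
        case False
        show ?thesis using False bs hc hz s(2) unfolding T_def by simp
      qed
    qed
    have cardP: "card ((\<lambda>p. (p, rad \<alpha> p)) ` P) = card C"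
      unfolding card_img_pair P_def using card_image injT inj_on_subset by blast
    have S0sub: "S0 \<subseteq> {s\<in>S0. snd (snd s) > 0} \<union> {s\<in>S0. snd (snd s) < 0}"
    proof
      fix s assume s: "s \<in> S0"
      have "snd (snd s) \<noteq> 0"
      proof
        assume "snd (snd s) = 0"
        then have "s = (0,0,0)" using s unfolding S0_def by (cases s) auto
        then show False using s S0n unfolding S0_def by auto
      qed
      then show "s \<in> {s\<in>S0. snd (snd s) > 0} \<union> {s\<in>S0. snd (snd s) < 0}" using s by auto
    qed
    have finS0: "finite S0" using S(1) unfolding S0_def by simp
    have c1: "card {s\<in>S0. snd (snd s) > 0} \<le> 1"
      by (rule axis_half[OF a S(3)]) (use S(1) in \<open>auto simp: S0_def\<close>)
    have c2: "card {s\<in>S0. snd (snd s) < 0} \<le> 1"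
      by (rule axis_half[OF a S(3)]) (use S(1) in \<open>auto simp: S0_def\<close>)
    have "card S0 \<le> card ({s\<in>S0. snd (snd s) > 0} \<union> {s\<in>S0. snd (snd s) < 0})"
      by (rule card_mono[OF _ S0sub]) (use finS0 in auto)
    also have "\<dots> \<le> card {s\<in>S0. snd (snd s) > 0} + card {s\<in>S0. snd (snd s) < 0}" by (rule card_Un_le)
    finally have cS0: "card S0 \<le> 2" using c1 c2 by simp
    have "card S = card S0 + card S1"
    proof -
      have "S = S0 \<union> S1" "S0 \<inter> S1 = {}" unfolding S1_def S0_def by auto
      then show ?thesis using card_Un_disjoint finS0 finS1 by metis
    qed
    then have "card \<B> \<le> 2 + 2 * k * card C" using S(2) cS0 cS1 C_def by simp
    then have "real (card \<B>) \<le> 2 + 2 * real k * real (card C)" by (metis of_nat_add of_nat_mult of_nat_le_iff of_nat_numeral)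
    also have "\<dots> \<le> 2 + 2 * (pi/\<theta> + 1) * real (card C)"
      using kle by (simp add: mult_right_mono)
    finally have ineq: "real (card \<B>) \<le> 2 * (pi / \<theta> + 1) * real (card ((\<lambda>p. (p, rad \<alpha> p)) ` P)) + 2"
      using cardP by simp
    show ?thesis using finP besP propP ineq by blast
  qed
qed

end
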